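(* Suppose that the bivariate copula $A$ allows a continuous Markov kernel $K_A$. Then $$\lim_{N\to\infty}\sup_{(x,y)\in[0,1]^2}\left|K_{\mathcal{CB}_N(A)}(x,[0,y])-K_A(x,[0,y])\right|=0,$$ i.e. $(\mathcal{CB}_N(A))_{N\in\mathbb{N}}$ converges uniformly conditional to $A$.
   Context: A (bivariate) copula is a distribution function on $[0,1]^2$ with uniform marginals; each copula $B$ corresponds to a doubly stochastic measure $\mu_B$ with $B(x,y)=\mu_B([0,x]\times[0,y])$. A Markov kernel of $B$ is a map $K_B:[0,1]\times\mathcal{B}([0,1])\to[0,1]$, measurable in the first argument, a probability measure in the second, with $\int_{E_1}K_B(x,E_2)\,d\lambda(x)=\mu_B(E_1\times E_2)$ for all Borel $E_1,E_2$ ($\lambda$ = Lebesgue measure). $A$ allows a continuous Markov kernel if it has a version $K_A$ with $(x,y)\mapsto K_A(x,[0,y])$ continuous on $[0,1]^2$; $K_A$ denotes this version. Checkerboard approximation: $I_1^N=[0,\tfrac1N]$, $I_i^N=(\tfrac{i-1}N,\tfrac iN]$ ($i=2,\dots,N$), $Q_{i,j}^N=I_i^N\times I_j^N$; $\mathcal{CB}_N(A)$ is the absolutely continuous copula with density $N^2\sum_{i,j=1}^N\mu_A(Q^N_{i,j})\mathbf 1_{Q^N_{i,j}}$, with Markov kernel version $K_{\mathcal{CB}_N(A)}(x,[0,y])=N^2\sum_{i,j=1}^N\mu_A(Q^N_{i,j})\mathbf 1_{I^N_i}(x)\,\lambda([0,y]\cap I^N_j)$. *)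

theory Defs
  imports "HOL-Probability.Probability"
begin

definition copula :: "(real \<Rightarrow> real \<Rightarrow> real) \<Rightarrow> bool" where
  "copula C \<longleftrightarrow>
     (\<forall>x\<in>{0..1}. C x 0 = 0 \<and> C 0 x = 0 \<and> C x 1 = x \<and> C 1 x = x) \<and>
     (\<forall>x1\<in>{0..1}. \<forall>x2\<in>{0..1}. \<forall>y1\<in>{0..1}. \<forall>y2\<in>{0..1}.
        x1 \<le> x2 \<longrightarrow> y1 \<le> y2 \<longrightarrow> C x2 y2 - C x1 y2 - C x2 y1 + C x1 y1 \<ge> 0)"

definition doubly_stochastic :: "(real \<times> real) measure \<Rightarrow> bool" where
  "doubly_stochastic \<mu> \<longleftrightarrow>
     sets \<mu> = sets (borel :: (real \<times> real) measure) \<and>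
     emeasure \<mu> (UNIV - {0..1} \<times> {0..1}) = 0 \<and>
     (\<forall>E\<in>sets borel. emeasure \<mu> (E \<times> UNIV) = emeasure lborel (E \<inter> {0..1})) \<and>
     (\<forall>E\<in>sets borel. emeasure \<mu> (UNIV \<times> E) = emeasure lborel (E \<inter> {0..1}))"

definition copula_measure :: "(real \<Rightarrow> real \<Rightarrow> real) \<Rightarrow> (real \<times> real) measure \<Rightarrow> bool" where
  "copula_measure C \<mu> \<longleftrightarrow> doubly_stochastic \<mu> \<and>
     (\<forall>x\<in>{0..1}. \<forall>y\<in>{0..1}. C x y = measure \<mu> ({0..x} \<times> {0..y}))"

definition markov_kernel :: "(real \<times> real) measure \<Rightarrow> (real \<Rightarrow> real measure) \<Rightarrow> bool" where
  "markov_kernel \<mu> K \<longleftrightarrow>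
     (\<forall>x\<in>{0..1}. prob_space (K x) \<and> sets (K x) = sets (borel :: real measure)
                 \<and> emeasure (K x) {0..1} = 1) \<and>
     (\<forall>E\<in>sets borel. (\<lambda>x. emeasure (K x) E) \<in> borel_measurable (restrict_space borel {0..1})) \<and>
     (\<forall>E1\<in>sets borel. \<forall>E2\<in>sets borel. E1 \<subseteq> {0..1} \<longrightarrow> E2 \<subseteq> {0..1} \<longrightarrow>
        (\<integral>\<^sup>+ x. emeasure (K x) E2 * indicator E1 x \<partial>lborel) = emeasure \<mu> (E1 \<times> E2))"

definition cb_I :: "nat \<Rightarrow> nat \<Rightarrow> real set" where
  "cb_I N i = (if i = 1 then {0..1 / real N} else {(real i - 1) / real N <.. real i / real N})"

definition cb_Q :: "nat \<Rightarrow> nat \<Rightarrow> nat \<Rightarrow> (real \<times> real) set" where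
  "cb_Q N i j = cb_I N i \<times> cb_I N j"

definition cb_kernel :: "(real \<times> real) measure \<Rightarrow> nat \<Rightarrow> real \<Rightarrow> real \<Rightarrow> real" where
  "cb_kernel \<mu> N x y = (real N)^2 * (\<Sum>i\<in>{1..N}. \<Sum>j\<in>{1..N}.
       measure \<mu> (cb_Q N i j) * indicator (cb_I N i) x * measure lborel ({0..y} \<inter> cb_I N j))"

end

theory Submission
  imports Defs
begin

lemma ds_finite:
  assumes "doubly_stochastic \<mu>"
  shows "finite_measure \<mu>" "sets \<mu> = sets borel" "space \<mu> = UNIV"
proof -
  show s: "sets \<mu> = sets borel" using assms unfolding doubly_stochastic_def by blast
  show sp: "space \<mu> = UNIV" using sets_eq_imp_space_eq[OF s] by simp
  have "\<forall>E\<in>sets borel. emeasure \<mu> (E \<times> UNIV) = emeasure lborel (E \<inter> {0..1::real})"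
    using assms unfolding doubly_stochastic_def by blast
  then have "emeasure \<mu> (UNIV \<times> UNIV) = emeasure lborel (UNIV \<inter> {0..1::real})"
    by (metis sets.top space_borel)
  then have "emeasure \<mu> (space \<mu>) = 1" using sp by simp
  then show "finite_measure \<mu>" by (intro finite_measureI) simp
qed

lemma kernel_emeasure:
  assumes "markov_kernel \<mu> K" "x \<in> {0..1}"
  shows "emeasure (K x) E = ennreal (measure (K x) E)"
proof -
  have "prob_space (K x)" using assms unfolding markov_kernel_def by blast
  then show ?thesis using prob_space_def finite_measure.emeasure_eq_measure by metis
qed

lemma avg_bound:
  assumes mk: "markov_kernel \<mu> K" and ds: "doubly_stochastic \<mu>"
    and E1: "E1 \<in> sets borel" "E1 \<subseteq> {0..1}" and E2: "E2 \<in> sets borel" "E2 \<subseteq> {0..1}"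
    and l: "emeasure lborel E1 = ennreal l" "0 \<le> l" and b: "0 \<le> b"
    and bnd: "\<And>t. t \<in> E1 \<Longrightarrow> a \<le> measure (K t) E2 \<and> measure (K t) E2 \<le> b"
  shows "l * a \<le> measure \<mu> (E1 \<times> E2) \<and> measure \<mu> (E1 \<times> E2) \<le> l * b"
proof -
  have fm: "finite_measure \<mu>" using ds_finite[OF ds] by blast
  have int: "(\<integral>\<^sup>+ x. emeasure (K x) E2 * indicator E1 x \<partial>lborel) = emeasure \<mu> (E1 \<times> E2)"
    using mk E1 E2 unfolding markov_kernel_def by blast
  have eq: "emeasure (K x) E2 * indicator E1 x = ennreal (measure (K x) E2) * indicator E1 x" for x
  proof (cases "x \<in> E1")
    case True
    then show ?thesis using kernel_emeasure[OF mk, of x E2] E1 by auto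
  qed simp
  have meas: "emeasure \<mu> (E1 \<times> E2) = ennreal (measure \<mu> (E1 \<times> E2))"
    using finite_measure.emeasure_eq_measure[OF fm] by blast
  have E1l: "E1 \<in> sets lborel" using E1 by simp
  have "emeasure \<mu> (E1 \<times> E2) \<le> (\<integral>\<^sup>+ x. ennreal b * indicator E1 x \<partial>lborel)"
    unfolding int[symmetric] eq
    by (intro nn_integral_mono) (auto simp: indicator_def intro!: ennreal_leI dest: bnd)
  also have "\<dots> = ennreal b * emeasure lborel E1" using nn_integral_cmult_indicator[OF E1l] by simp
  also have "\<dots> = ennreal (l * b)" using l b by (simp add: ennreal_mult mult.commute)
  finally have up: "measure \<mu> (E1 \<times> E2) \<le> l * b" using meas l b by (simp add: ennreal_le_iff)
  have lo: "l * a \<le> measure \<mu> (E1 \<times> E2)"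
  proof (cases "a \<le> 0")
    case True
    then show ?thesis using l by (meson measure_nonneg mult_nonneg_nonpos order_trans)
  next
    case False
    have "ennreal (l * a) = ennreal a * emeasure lborel E1" using l False by (simp add: ennreal_mult mult.commute)
    also have "\<dots> = (\<integral>\<^sup>+ x. ennreal a * indicator E1 x \<partial>lborel)"
      using nn_integral_cmult_indicator[OF E1l] by simp
    also have "\<dots> \<le> emeasure \<mu> (E1 \<times> E2)"
      unfolding int[symmetric] eq
      by (intro nn_integral_mono) (auto simp: indicator_def intro!: ennreal_leI dest: bnd)
    finally show ?thesis using meas by (simp add: ennreal_le_iff)
  qed
  show ?thesis using up lo by blast
qed


lemma cbI_range: "t \<in> cb_I N i \<Longrightarrow> 1 \<le> i \<Longrightarrow> (real i - 1) / real N \<le> t \<and> t \<le> real i / real N"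
  by (auto simp: cb_I_def split: if_splits)

lemma cbI_sub: "1 \<le> i \<Longrightarrow> i \<le> N \<Longrightarrow> cb_I N i \<subseteq> {0..1}"
proof
  fix t assume a: "1 \<le> i" "i \<le> N" "t \<in> cb_I N i"
  have "(real i - 1) / real N \<le> t \<and> t \<le> real i / real N" using cbI_range a by blast
  moreover have "0 \<le> (real i - 1) / real N" using a by simp
  moreover have "real i / real N \<le> 1" using a by simp
  ultimately show "t \<in> {0..1}" by simp
qed

lemma cbI_borel: "cb_I N i \<in> sets borel"
  by (simp add: cb_I_def)

lemma cbI_emeasure: "1 \<le> i \<Longrightarrow> 0 < N \<Longrightarrow> emeasure lborel (cb_I N i) = ennreal (1 / real N)"
  by (auto simp: cb_I_def diff_divide_distrib)

lemma cbI_close: "t \<in> cb_I N i \<Longrightarrow> x \<in> cb_I N i \<Longrightarrow> 1 \<le> i \<Longrightarrow> 0 < N \<Longrightarrow> \<bar>t - x\<bar> \<le> 1 / real N"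
proof -
  assume a: "t \<in> cb_I N i" "x \<in> cb_I N i" "1 \<le> i" "0 < N"
  have "(real i - 1) / real N \<le> t \<and> t \<le> real i / real N" "(real i - 1) / real N \<le> x \<and> x \<le> real i / real N"
    using cbI_range a by blast+
  moreover have "real i / real N - (real i - 1) / real N = 1 / real N" by (simp add: diff_divide_distrib)
  ultimately show ?thesis by linarith
qed

lemma cbI_disj: "x \<in> cb_I N i \<Longrightarrow> x \<in> cb_I N i' \<Longrightarrow> 1 \<le> i \<Longrightarrow> 1 \<le> i' \<Longrightarrow> 0 < N \<Longrightarrow> i = i'"
proof (rule ccontr)
  assume a: "x \<in> cb_I N i" "x \<in> cb_I N i'" "1 \<le> i" "1 \<le> i'" "0 < N" "i \<noteq> i'"
  have key: False if "x \<in> cb_I N p" "x \<in> cb_I N q" "1 \<le> p" "p < q" for p q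
  proof -
    have "x \<le> real p / real N" using cbI_range that by blast
    moreover have "(real q - 1) / real N < x" using that by (auto simp: cb_I_def split: if_splits)
    moreover have "real p / real N \<le> (real q - 1) / real N" using that a(5)
      by (intro divide_right_mono) auto
    ultimately show False by linarith
  qed
  show False
  proof (cases "i < i'")
    case True then show ?thesis using key[of i i'] a by blast
  next
    case False then have "i' < i" using a(6) by linarith
    then show ?thesis using key[of i' i] a by blast
  qed
qed

lemma cbI_exists: assumes "x \<in> {0..1}" "0 < N" shows "\<exists>i\<in>{1..N}. x \<in> cb_I N i"
proof (cases "x = 0")
  case True
  then show ?thesis using assms by (auto simp: cb_I_def intro!: bexI[of _ 1])
next
  case False
  then have xp: "0 < x" using assms by auto
  define i where "i = nat \<lceil>real N * x\<rceil>"
  have Nxp: "0 < real N * x" using xp assms by simp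
  have c0: "0 < \<lceil>real N * x\<rceil>" using Nxp by simp
  have ci: "real i = of_int \<lceil>real N * x\<rceil>" unfolding i_def using c0 by simp
  have c1: "real N * x \<le> real i" using ci ceiling_correct[of "real N * x"] by linarith
  have c2: "real i - 1 < real N * x" using ci ceiling_correct[of "real N * x"] by linarith
  have "(0::real) < real i" using c1 Nxp by linarith
  then have i1: "1 \<le> i" by simp
  have NxN: "real N * x \<le> real N" using assms by (simp add: mult_left_le)
  then have "real N * x \<le> of_int (int N)" by simp
  then have "\<lceil>real N * x\<rceil> \<le> int N" by (rule ceiling_le)
  then have iN: "i \<le> N" unfolding i_def using NxN by simp
  have Np: "0 < real N" using assms by simp
  have "x \<le> real i / real N" using c1 Np by (simp add: field_simps)
  moreover have "(real i - 1) / real N < x" using c2 Np by (simp add: field_simps)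
  ultimately have "x \<in> cb_I N i" using xp i1 by (auto simp: cb_I_def)
  then show ?thesis using i1 iN by auto
qed

lemma w_formula:
  assumes "0 < N" "1 \<le> j" "0 \<le> y"
  shows "measure lborel ({0..y} \<inter> cb_I N j) = max 0 (min y (real j / real N) - (real j - 1) / real N)"
proof (cases "j = 1")
  case True
  then have "{0..y} \<inter> cb_I N j = {0..min y (1 / real N)}" by (auto simp: cb_I_def)
  moreover have "emeasure lborel {0..min y (1 / real N)} = ennreal (min y (1 / real N))"
    using assms by simp
  ultimately show ?thesis using True assms by (simp add: measure_eq_emeasure_eq_ennreal)
next
  case False
  then have j2: "2 \<le> j" using assms by simp
  have pos: "0 \<le> (real j - 1) / real N" using j2 by simp
  have "{0..y} \<inter> cb_I N j = {(real j - 1) / real N <.. min y (real j / real N)}"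
    using False pos by (auto simp: cb_I_def)
  moreover have "emeasure lborel {(real j - 1) / real N <.. min y (real j / real N)}
     = ennreal (max 0 (min y (real j / real N) - (real j - 1) / real N))"
  proof (cases "(real j - 1) / real N \<le> min y (real j / real N)")
    case True then show ?thesis by simp
  next
    case False
    then have "{(real j - 1) / real N <.. min y (real j / real N)} = {}" by auto
    moreover have "max 0 (min y (real j / real N) - (real j - 1) / real N) = 0"
    proof -
      have "min y (real j / real N) - (real j - 1) / real N < 0" using False by linarith
      then show ?thesis by simp
    qed
    ultimately show ?thesis by (simp only: emeasure_empty ennreal_0)
  qed
  ultimately show ?thesis by (simp add: measure_eq_emeasure_eq_ennreal)
qed

lemma tele: "(\<Sum>j\<in>{1..N}. if j \<le> k then f j - f (j - 1) else 0) = f (min k N) - f 0" for f :: "nat \<Rightarrow> real"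
proof (induction N)
  case 0 then show ?case by simp
next
  case (Suc N)
  show ?case
  proof (cases "k \<le> N")
    case True then show ?thesis using Suc by (simp add: min_def)
  next
    case False then have "k = Suc N \<or> Suc N < k" by auto
    then show ?thesis using Suc False by (auto simp: min_def)
  qed
qed


lemma close_lem:
  fixes a y n :: real
  assumes n: "0 < n" and h: "a \<le> n * y + 1 \<and> n * y \<le> a + 1"
  shows "\<bar>a / n - y\<bar> \<le> 1 / n"
proof -
  have "\<bar>a - n * y\<bar> \<le> 1" using h by linarith
  then have "\<bar>a - n * y\<bar> / n \<le> 1 / n" using n by (simp add: divide_right_mono)
  moreover have "a / n - y = (a - n * y) / n" using n by (simp add: field_simps)
  then have "\<bar>a / n - y\<bar> = \<bar>a - n * y\<bar> / n" using n by (simp add: abs_divide)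
  ultimately show ?thesis by simp
qed

lemma pointwise:
  assumes mk: "markov_kernel \<mu> K" and ds: "doubly_stochastic \<mu>"
    and N: "0 < N" and x: "x \<in> {0..1}" and y: "y \<in> {0..1}" and e: "0 \<le> e"
    and close: "\<And>t z. t \<in> {0..1} \<Longrightarrow> z \<in> {0..1} \<Longrightarrow> \<bar>t - x\<bar> \<le> 1 / real N \<Longrightarrow>
        \<bar>z - y\<bar> \<le> 1 / real N \<Longrightarrow> \<bar>measure (K t) {0..z} - measure (K x) {0..y}\<bar> \<le> e"
  shows "\<bar>cb_kernel \<mu> N x y - measure (K x) {0..y}\<bar> \<le> e"
proof -
  have fm: "finite_measure \<mu>" and sm: "sets \<mu> = sets borel" using ds_finite[OF ds] by blast+
  obtain i where i: "i \<in> {1..N}" "x \<in> cb_I N i" using cbI_exists[OF x N] by blast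
  define F where "F = measure (K x) {0..y}"
  define w where "w j = real N * measure lborel ({0..y} \<inter> cb_I N j)" for j
  define M where "M k = measure \<mu> (cb_I N i \<times> {0..real k / real N})" for k
  have Np: "0 < real N" using N by simp
  have Qsets: "cb_I N i \<times> E \<in> sets \<mu>" if "E \<in> sets borel" for E
  proof -
    have "cb_I N i \<times> E \<in> sets (borel \<Otimes>\<^sub>M borel)" by (rule pair_measureI[OF cbI_borel that])
    then show ?thesis unfolding sm borel_prod .
  qed
  have M0: "M 0 = 0"
  proof -
    have "emeasure \<mu> (UNIV \<times> {0}) = emeasure lborel ({0::real} \<inter> {0..1})"
      using ds unfolding doubly_stochastic_def by simp
    then have z: "emeasure \<mu> (UNIV \<times> {0}) = 0" by simp
    have "emeasure \<mu> (cb_I N i \<times> {0}) = 0"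
    proof (rule emeasure_eq_0[OF _ z])
      have "(UNIV::real set) \<times> {0::real} \<in> sets (borel \<Otimes>\<^sub>M borel)" by (rule pair_measureI) auto
      then show "UNIV \<times> {0::real} \<in> sets \<mu>" unfolding sm borel_prod .
    qed auto
    then show ?thesis unfolding M_def by (simp add: measure_def)
  qed
  have Mmono: "M j \<le> M k" if "j \<le> k" for j k
  proof -
    have "real j / real N \<le> real k / real N" using that by (simp add: divide_right_mono)
    then show ?thesis unfolding M_def
      by (intro finite_measure.finite_measure_mono[OF fm] Qsets) auto
  qed
  have Qeq: "measure \<mu> (cb_Q N i j) = M j - M (j - 1)" if "j \<in> {1..N}" for j
  proof (cases "j = 1")
    case True
    then show ?thesis using M0 by (simp add: M_def cb_Q_def cb_I_def)
  next
    case False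
    then have j2: "2 \<le> j" using that by simp
    have "cb_Q N i j = cb_I N i \<times> {0..real j / real N} - cb_I N i \<times> {0..real (j - 1) / real N}"
    proof -
      have "real (j - 1) = real j - 1" using j2 by simp
      moreover have pos: "0 \<le> (real j - 1) / real N" using j2 by simp
      ultimately show ?thesis using False by (auto simp: cb_Q_def cb_I_def) (use pos in linarith)+
    qed
    moreover have "cb_I N i \<times> {0..real (j - 1) / real N} \<subseteq> cb_I N i \<times> {0..real j / real N}"
    proof -
      have "real (j - 1) / real N \<le> real j / real N" by (simp add: divide_right_mono)
      then show ?thesis by auto
    qed
    ultimately show ?thesis unfolding M_def
      by (simp add: finite_measure.finite_measure_Diff[OF fm] Qsets)
  qed
  have w01: "0 \<le> w j \<and> w j \<le> 1" if "1 \<le> j" for j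
  proof -
    have we: "w j = real N * max 0 (min y (real j / real N) - (real j - 1) / real N)"
      unfolding w_def using w_formula[OF N that] y by simp
    have "min y (real j / real N) - (real j - 1) / real N \<le> 1 / real N"
      by (simp add: diff_divide_distrib)
    then have h: "max 0 (min y (real j / real N) - (real j - 1) / real N) \<le> 1 / real N"
      using Np by simp
    have "real N * max 0 (min y (real j / real N) - (real j - 1) / real N) \<le> real N * (1 / real N)"
      using h Np by (intro mult_left_mono) auto
    then have "w j \<le> 1" using we Np by simp
    moreover have "0 \<le> w j" unfolding we using Np by simp
    ultimately show ?thesis by blast
  qed
  define k where "k = nat \<lfloor>real N * y\<rfloor>"
  have fl0: "0 \<le> \<lfloor>real N * y\<rfloor>" using y Np by simp
  have kr: "real k = of_int \<lfloor>real N * y\<rfloor>" unfolding k_def using fl0 by simp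
  have k1: "real k \<le> real N * y" "real N * y < real k + 1"
    using kr floor_correct[of "real N * y"] by linarith+
  have NyN: "real N * y \<le> real N" using y by (simp add: mult_left_le)
  have kN: "k \<le> N"
  proof -
    have "real k \<le> real N" using k1 NyN by linarith
    then show ?thesis by simp
  qed
  have wk: "w j = 1" if "1 \<le> j" "j \<le> k" for j
  proof -
    have "real j \<le> y * real N" using k1 that by (simp add: mult.commute)
    then have "real j / real N \<le> y" using Np by (simp add: pos_divide_le_eq)
    then have "min y (real j / real N) - (real j - 1) / real N = 1 / real N"
      by (simp add: diff_divide_distrib)
    then show ?thesis unfolding w_def using w_formula[OF N that(1)] y Np by simp
  qed
  have wk2: "w j = 0" if "k + 2 \<le> j" for j
  proof -
    have "real k + 1 \<le> real j - 1" using that by simp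
    then have "y * real N \<le> real j - 1" using k1 by (simp add: mult.commute)
    then have "y \<le> (real j - 1) / real N" using Np by (simp add: pos_le_divide_eq)
    then have "min y (real j / real N) - (real j - 1) / real N \<le> 0" by linarith
    then show ?thesis unfolding w_def using w_formula[OF N, of j] y that by simp
  qed
  have Mk: "\<bar>real N * M k - F\<bar> \<le> e" if "k \<le> N" "\<bar>real k / real N - y\<bar> \<le> 1 / real N" for k
  proof -
    have kk: "real k / real N \<in> {0..1}" using that Np by simp
    have F0: "0 \<le> F" unfolding F_def by simp
    have "(1 / real N) * (F - e) \<le> measure \<mu> (cb_I N i \<times> {0..real k / real N}) \<and>
        measure \<mu> (cb_I N i \<times> {0..real k / real N}) \<le> (1 / real N) * (F + e)"
    proof (rule avg_bound[OF mk ds cbI_borel cbI_sub])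
      show "1 \<le> i" "i \<le> N" using i by auto
      show "{0..real k / real N} \<in> sets borel" by simp
      show "{0..real k / real N} \<subseteq> {0..1}" using kk by auto
      show "emeasure lborel (cb_I N i) = ennreal (1 / real N)" using cbI_emeasure i N by simp
      show "0 \<le> 1 / real N" by simp
      show "0 \<le> F + e" using F0 e by simp
      fix t assume t: "t \<in> cb_I N i"
      have "t \<in> {0..1}" using t cbI_sub[of i N] i by auto
      moreover have "\<bar>t - x\<bar> \<le> 1 / real N" using cbI_close[OF t i(2)] i N by simp
      ultimately have "\<bar>measure (K t) {0..real k / real N} - F\<bar> \<le> e"
        unfolding F_def using close kk that(2) by blast
      then show "F - e \<le> measure (K t) {0..real k / real N} \<and> measure (K t) {0..real k / real N} \<le> F + e"
        by linarith
    qed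
    then have "F - e \<le> real N * M k \<and> real N * M k \<le> F + e"
      unfolding M_def using Np by (simp add: field_simps)
    then show ?thesis by linarith
  qed
  have cb: "cb_kernel \<mu> N x y = real N * (\<Sum>j\<in>{1..N}. (M j - M (j - 1)) * w j)"
  proof -
    have "cb_kernel \<mu> N x y = (real N)^2 * (\<Sum>i'\<in>{1..N}. if i' = i then
        (\<Sum>j\<in>{1..N}. measure \<mu> (cb_Q N i j) * measure lborel ({0..y} \<inter> cb_I N j)) else 0)"
      unfolding cb_kernel_def
    proof (intro arg_cong[where f="\<lambda>s. (real N)^2 * s"] sum.cong refl)
      fix i' assume i': "i' \<in> {1..N}"
      show "(\<Sum>j\<in>{1..N}. measure \<mu> (cb_Q N i' j) * indicator (cb_I N i') x * measure lborel ({0..y} \<inter> cb_I N j)) =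
         (if i' = i then (\<Sum>j\<in>{1..N}. measure \<mu> (cb_Q N i j) * measure lborel ({0..y} \<inter> cb_I N j)) else 0)"
      proof (cases "i' = i")
        case True then show ?thesis using i by simp
      next
        case False
        then have "x \<notin> cb_I N i'" using cbI_disj[of x N i i'] i i' N by auto
        then show ?thesis using False by simp
      qed
    qed
    also have "\<dots> = (real N)^2 * (\<Sum>j\<in>{1..N}. measure \<mu> (cb_Q N i j) * measure lborel ({0..y} \<inter> cb_I N j))"
      using i by simp
    also have "\<dots> = real N * (\<Sum>j\<in>{1..N}. (M j - M (j - 1)) * w j)"
      unfolding w_def power2_eq_square sum_distrib_left
      by (intro sum.cong refl) (simp add: Qeq)
    finally show ?thesis .
  qed
  define S where "S = (\<Sum>j\<in>{1..N}. (M j - M (j - 1)) * w j)"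
  have dM: "0 \<le> M j - M (j - 1)" for j using Mmono[of "j - 1" j] by simp
  have lo: "M k \<le> S"
  proof -
    have "M k = (\<Sum>j\<in>{1..N}. if j \<le> k then M j - M (j - 1) else 0)"
      using tele[where f=M and k=k and N=N] kN M0 by (simp add: min_def)
    also have "\<dots> \<le> S" unfolding S_def
    proof (intro sum_mono)
      fix j assume j: "j \<in> {1..N}"
      have "0 \<le> (M j - M (j - 1)) * w j" using dM[of j] w01[of j] j by simp
      then show "(if j \<le> k then M j - M (j - 1) else 0) \<le> (M j - M (j - 1)) * w j"
        using wk[of j] j by simp
    qed
    finally show ?thesis .
  qed
  define k' where "k' = min (k + 1) N"
  have up: "S \<le> M k'"
  proof -
    have "S \<le> (\<Sum>j\<in>{1..N}. if j \<le> k' then M j - M (j - 1) else 0)" unfolding S_def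
    proof (intro sum_mono)
      fix j assume j: "j \<in> {1..N}"
      show "(M j - M (j - 1)) * w j \<le> (if j \<le> k' then M j - M (j - 1) else 0)"
      proof (cases "j \<le> k'")
        case True
        then show ?thesis using w01[of j] j dM[of j] by (simp add: mult_left_le)
      next
        case False
        then have "k + 2 \<le> j" using j unfolding k'_def by auto
        then show ?thesis using wk2 False by simp
      qed
    qed
    also have "\<dots> = M k'" using tele[where f=M and k=k' and N=N] M0 unfolding k'_def by (simp add: min_def)
    finally show ?thesis .
  qed
  have k_close: "\<bar>real k / real N - y\<bar> \<le> 1 / real N"
    using close_lem[OF Np] k1 by simp
  have k'_close: "\<bar>real k' / real N - y\<bar> \<le> 1 / real N"
  proof (cases "k + 1 \<le> N")
    case True
    then have "real k' = real k + 1" unfolding k'_def by simp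
    then show ?thesis using close_lem[OF Np] k1 by simp
  next
    case False
    then have "k = N" "k' = N" using kN unfolding k'_def by auto
    then have "real k' = real k" by simp
    then have "real k' \<le> real N * y + 1 \<and> real N * y \<le> real k' + 1" using k1 NyN \<open>k = N\<close> by linarith
    then show ?thesis by (rule close_lem[OF Np])
  qed
  have "k' \<le> N" unfolding k'_def by simp
  have A: "\<bar>real N * M k - F\<bar> \<le> e" using Mk[OF kN k_close] .
  have B: "\<bar>real N * M k' - F\<bar> \<le> e" using Mk[OF \<open>k' \<le> N\<close> k'_close] .
  have "real N * M k \<le> real N * S" "real N * S \<le> real N * M k'" using lo up Np by simp_all
  then show ?thesis using A B cb unfolding S_def F_def by (simp add: abs_le_iff)
qed


theorem lemma3p2:
  fixes A :: "real \<Rightarrow> real \<Rightarrow> real"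
    and \<mu> :: "(real \<times> real) measure"
    and K :: "real \<Rightarrow> real measure"
  assumes "copula A"
    and "copula_measure A \<mu>"
    and "markov_kernel \<mu> K"
    and "continuous_on ({0..1} \<times> {0..1}) (\<lambda>(x, y). measure (K x) {0..y})"
  shows "(\<lambda>N. SUP p\<in>{0..1} \<times> {0..1}.
            \<bar>cb_kernel \<mu> N (fst p) (snd p) - measure (K (fst p)) {0..snd p}\<bar>)
         \<longlonglongrightarrow> 0"
proof (rule metric_LIMSEQ_I)
  fix r :: real assume r: "0 < r"
  have mk: "markov_kernel \<mu> K" by fact
  have ds: "doubly_stochastic \<mu>" using assms(2) unfolding copula_measure_def by blast
  define G where "G = (\<lambda>(x, y). measure (K x) {0..y::real})"
  have uc: "uniformly_continuous_on ({0..1} \<times> {0..1}) G"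
    unfolding G_def using assms(4) by (intro compact_uniformly_continuous compact_Times) auto
  obtain d where d: "0 < d" and dd: "\<And>p q. p \<in> {0..1} \<times> {0..1} \<Longrightarrow> q \<in> {0..1} \<times> {0..1} \<Longrightarrow>
      dist q p < d \<Longrightarrow> dist (G q) (G p) < r / 2"
    using uc r unfolding uniformly_continuous_on_def by (metis half_gt_zero)
  define no where "no = nat \<lceil>2 / d\<rceil> + 1"
  show "\<exists>no. \<forall>n\<ge>no. dist (SUP p\<in>{0..1} \<times> {0..1}.
            \<bar>cb_kernel \<mu> n (fst p) (snd p) - measure (K (fst p)) {0..snd p}\<bar>) 0 < r"
  proof (intro exI allI impI)
    fix n assume n: "no \<le> n"
    have n0: "0 < n" using n unfolding no_def by simp
    have "2 / d \<le> real (nat \<lceil>2 / d\<rceil>)" by linarith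
    then have "2 / d < real n" using n unfolding no_def by linarith
    then have nd: "2 / real n < d" using d n0 by (simp add: field_simps)
    define g where "g p = \<bar>cb_kernel \<mu> n (fst p) (snd p) - measure (K (fst p)) {0..snd p}\<bar>" for p
    have gb: "g p \<le> r / 2" if p: "p \<in> {0..1} \<times> {0..1}" for p
    proof -
      obtain x y where xy: "p = (x, y)" "x \<in> {0..1}" "y \<in> {0..1}" using p by auto
      have "\<bar>cb_kernel \<mu> n x y - measure (K x) {0..y}\<bar> \<le> r / 2"
      proof (rule pointwise[OF mk ds n0 xy(2,3)])
        show "0 \<le> r / 2" using r by simp
        fix t z assume tz: "t \<in> {0..1}" "z \<in> {0..1}" "\<bar>t - x\<bar> \<le> 1 / real n" "\<bar>z - y\<bar> \<le> 1 / real n"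
        have "dist (t, z) (x, y) \<le> \<bar>t - x\<bar> + \<bar>z - y\<bar>"
          unfolding dist_Pair_Pair dist_real_def using sqrt_sum_squares_le_sum_abs[of "t - x" "z - y"] by simp
        also have "\<dots> \<le> 2 / real n" using tz by simp
        finally have "dist (t, z) (x, y) < d" using nd by linarith
        then have "dist (G (t, z)) (G (x, y)) < r / 2" using dd[of "(x, y)" "(t, z)"] tz xy by auto
        then show "\<bar>measure (K t) {0..z} - measure (K x) {0..y}\<bar> \<le> r / 2"
          unfolding G_def dist_real_def by simp
      qed
      then show ?thesis unfolding g_def xy by simp
    qed
    have ne: "{0..1::real} \<times> {0..1::real} \<noteq> {}" by auto
    have bdd: "bdd_above (g ` ({0..1} \<times> {0..1}))" using gb by (intro bdd_aboveI2[where M="r / 2"]) auto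
    have le: "(SUP p\<in>{0..1} \<times> {0..1}. g p) \<le> r / 2" using gb ne by (intro cSUP_least) auto
    have "g (0, 0) \<le> (SUP p\<in>{0..1} \<times> {0..1}. g p)" using bdd by (intro cSUP_upper) auto
    moreover have "0 \<le> g (0, 0)" unfolding g_def by simp
    ultimately have ge: "0 \<le> (SUP p\<in>{0..1} \<times> {0..1}. g p)" by linarith
    show "dist (SUP p\<in>{0..1} \<times> {0..1}.
            \<bar>cb_kernel \<mu> n (fst p) (snd p) - measure (K (fst p)) {0..snd p}\<bar>) 0 < r"
      using le ge r unfolding g_def[symmetric] dist_real_def by simp
  qed
qed

end
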